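(* Let $p(x,y)\in\mathbb{R}[x,y]$ be a real stable polynomial which is quadratic with respect to $x$. Suppose $(x_0,y_0)\in\mathbf{Ab}_p$ and $(x_0+\delta,y_0)\in\mathbf{Ab}_{q}$, where $q=(1-\frac12\partial_x^2)p$. Then: (i) if $\delta=1$, then $\Phi_q^y(x_0+\delta,y_0)\le\Phi_p^y(x_0,y_0)$; (ii) if $\delta\in(0,1)$ and $\Phi_p^x(x_0,y_0)\le\frac{\delta}{1-\delta^2}$, then $\Phi_q^y(x_0+\delta,y_0)\le\Phi_p^y(x_0,y_0)$.
   Context: A polynomial $p\in\mathbb{R}[z_1,\ldots,z_n]$ is real stable if $p(z_1,\ldots,z_n)\neq0$ whenever $\mathrm{Im}(z_i)>0$ for all $i$. A point $\mathbf{z}\in\mathbb{R}^n$ is above the roots of $p$ if $p(\mathbf{z}+\mathbf{t})>0$ for all $\mathbf{t}\in\mathbb{R}^n_{\ge0}$; $\mathbf{Ab}_p$ denotes the set of such points. For a real stable $p$ and $\mathbf{z}\in\mathbf{Ab}_p$, the barrier function of $p$ in direction $i$ is $\Phi_p^i(\mathbf{z})=\partial_{z_i}p(\mathbf{z})/p(\mathbf{z})$; for bivariate $p(x,y)$ the directions are written $x$ and $y$. *)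

theory Defs
  imports "HOL-Analysis.Analysis" "HOL-Computational_Algebra.Polynomial"
begin

text \<open>A bivariate real polynomial p(x,y) is represented as an element of (R[y])[x],
  i.e. a univariate polynomial in x whose coefficients are polynomials in y.
  The x-degree is the outer degree.\<close>

type_synonym bipoly = "real poly poly"

definition eval2 :: "bipoly \<Rightarrow> 'a::{real_algebra_1,comm_ring_1} \<Rightarrow> 'a \<Rightarrow> 'a" where
  "eval2 p x y = poly (map_poly (\<lambda>c. poly (map_poly of_real c) y) p) x"

definition real_stable2 :: "bipoly \<Rightarrow> bool" where
  "real_stable2 p \<longleftrightarrow>
     (\<forall>z w :: complex. Im z > 0 \<and> Im w > 0 \<longrightarrow> eval2 p z w \<noteq> 0)"

definition above_roots2 :: "bipoly \<Rightarrow> (real \<times> real) set" where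
  "above_roots2 p = {(x, y). \<forall>s t. s \<ge> 0 \<longrightarrow> t \<ge> 0 \<longrightarrow> eval2 p (x + s) (y + t) > (0::real)}"

definition dx :: "bipoly \<Rightarrow> bipoly" where
  "dx p = pderiv p"

definition dy :: "bipoly \<Rightarrow> bipoly" where
  "dy p = map_poly pderiv p"

definition barrier_x :: "bipoly \<Rightarrow> real \<Rightarrow> real \<Rightarrow> real" where
  "barrier_x p x y = eval2 (dx p) x y / eval2 p x y"

definition barrier_y :: "bipoly \<Rightarrow> real \<Rightarrow> real \<Rightarrow> real" where
  "barrier_y p x y = eval2 (dy p) x y / eval2 p x y"

end

theory Submission
  imports Defs
begin

lemma quad_nonneg:
  fixes A B C :: real
  assumes h: "\<And>s. A * s^ 2 + B * s + C \<ge> 0"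
  shows "A \<ge> 0 \<and> B^ 2 \<le> 4 * A * C"
proof -
  have A: "A \<ge> 0"
  proof (rule ccontr)
    assume "\<not> A \<ge> 0"
    hence An: "A < 0" by simp
    define s where "s = sqrt ((\<bar>C\<bar> + 1) / (-A))"
    have "(\<bar>C\<bar> + 1) / (-A) \<ge> 0" using An by (intro divide_nonneg_pos) auto
    hence "s^ 2 = (\<bar>C\<bar> + 1) / (-A)" unfolding s_def by simp
    hence "A  *  s^ 2 = -(\<bar>C\<bar> + 1)" using An by (simp add: field_simps)
    moreover have "A * s^ 2 + B * s + C \<ge> 0" "A * (-s)^ 2 + B * (-s) + C \<ge> 0" using h[of s] h[of "-s"] by auto
    ultimately show False by (simp add: power2_eq_square)
  qed
  show ?thesis
  proof (cases "A = 0")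
    case True
    have "B = 0"
    proof (rule ccontr)
      assume "B \<noteq> 0"
      have "A * (-(\<bar>C\<bar>+1)/B)^ 2 + B * (-(\<bar>C\<bar>+1)/B) + C \<ge> 0" using h by blast
      with True \<open>B \<noteq> 0\<close> show False by simp
    qed
    with True show ?thesis by simp
  next
    case False
    with A have Ap: "A > 0" by simp
    have "A * (-B/(2 * A))^ 2 + B * (-B/(2 * A)) + C \<ge> 0" using h by blast
    hence "B^ 2/(4 * A) - B^ 2/(2 * A) + C \<ge> 0" using Ap by (simp add: power2_eq_square field_simps)
    hence "0 \<le> (4 * A * C - B^ 2) / (4 * A)" using Ap by (simp add: field_simps)
    hence "0 \<le> 4 * A * C - B^ 2" using Ap by (simp add: zero_le_divide_iff)
    with A show ?thesis by simp
  qed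
qed

lemma core:
  fixes a b c a1 b1 c1 d :: real
  assumes hc: "c > 0"
    and hP: "\<And>s. s \<ge> 0 \<Longrightarrow> c + b * s + a * s^ 2 > 0"
    and hQ: "c + b * d + a * d^ 2 - a > 0"
    and hW: "\<And>s. (a * b1 - a1 * b) * s^ 2 + (2 * (a * c1 - a1 * c)) * s + (b * c1 - b1 * c) \<ge> 0"
    and ha: "a \<ge> 0" and ha1: "a = 0 \<Longrightarrow> a1 \<ge> 0"
    and hd: "d = 1 \<or> (0 < d \<and> d < 1 \<and> b / c \<le> d / (1 - d^ 2))"
  shows "(c1 + b1 * d + a1 * d^ 2 - a1) / (c + b * d + a * d^ 2 - a) \<le> c1 / c"
proof -
  define C0 where "C0 = b * c1 - b1 * c"
  have C0: "C0 \<ge> 0" using hW[of 0] by (simp add: C0_def)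
  have dpos: "d > 0" using hd by auto
  have diff: "c1 * (b * d + a * (d^ 2 - 1)) - c * (b1 * d + a1 * (d^ 2 - 1)) \<ge> 0"
  proof (cases "a = 0")
    case True
    have q: "- a1 * b \<ge> 0 \<and> (2 * (- a1 * c))^ 2 \<le> 4 * (- a1 * b) * C0"
      using quad_nonneg[of "- a1 * b" "2 * (- a1 * c)" C0] hW True by (simp add: C0_def)
    have "a1 = 0"
    proof (rule ccontr)
      assume "a1 \<noteq> 0"
      with ha1 True have a1p: "a1 > 0" by simp
      with q have "b \<le> 0" by (simp add: mult_le_0_iff)
      show False
      proof (cases "b = 0")
        case True
        have "a1 * (a1 * (c * c)) > 0" using a1p hc by simp
        with q a1p hc True show False by (simp add: power2_eq_square)
      next
        case False
        with \<open>b \<le> 0\<close> have "b < 0" by simp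
        have "c + b * (c / (- b)) + a * (c / (- b))^ 2 > 0"
          using hP[of "c / (- b)"] \<open>b < 0\<close> hc by (simp add: divide_nonneg_neg)
        with True \<open>b < 0\<close> show False by simp
      qed
    qed
    with True show ?thesis using C0 dpos by (simp add: C0_def algebra_simps)
  next
    case False
    with ha have ap: "a > 0" by simp
    define \<beta> where "\<beta> = a * b1 - a1 * b"
    define \<gamma> where "\<gamma> = a * c1 - a1 * c"
    have q: "\<beta> \<ge> 0 \<and> (2 * \<gamma>)^ 2 \<le> 4 * \<beta> * C0"
      using quad_nonneg[of \<beta> "2 * \<gamma>" C0] hW by (simp add: C0_def \<beta>_def \<gamma>_def)
    have aC0: "a * C0 = b * \<gamma> - c * \<beta>" by (simp add: C0_def \<beta>_def \<gamma>_def algebra_simps)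
    have E1: "b * \<gamma> - c * \<beta> \<ge> 0" using aC0 ap C0 by (metis mult_nonneg_nonneg less_imp_le)
    have "a * (\<gamma>^ 2) \<le> a * (\<beta> * C0)" using q ap by (simp add: power_mult_distrib)
    moreover have "b * \<gamma> * \<beta> = a * (\<beta> * C0) + c * \<beta>^ 2"
      proof -
      have "b * \<gamma> = a * C0 + c * \<beta>" using aC0 by simp
      hence "b * \<gamma> * \<beta> = (a * C0 + c * \<beta>) * \<beta>" by simp
      thus ?thesis by (simp add: algebra_simps power2_eq_square)
    qed
    ultimately have D: "b * \<gamma> * \<beta> - c * \<beta>^ 2 - a * \<gamma>^ 2 \<ge> 0"
      by linarith
    have adiff: "a * (c1 * (b * d + a * (d^ 2 - 1)) - c * (b1 * d + a1 * (d^ 2 - 1)))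
       = \<gamma> * (b * d + a * (d^ 2 - 1)) - c * \<beta> * d"
      by (simp add: \<beta>_def \<gamma>_def algebra_simps)
    have G: "\<gamma> * (b * d + a * (d^ 2 - 1)) - c * \<beta> * d \<ge> 0"
    proof (cases "d = 1")
      case True
      then show ?thesis using E1 by (simp add: algebra_simps)
    next
      case False
      with hd have d01: "0 < d" "d < 1" and bc: "b / c \<le> d / (1 - d^ 2)" by auto
      have od: "1 - d^ 2 > 0" using d01 by (simp add: power2_eq_square) (metis mult_strict_mono' less_le_not_le mult_1 order.refl d01)
      have bc': "b * (1 - d^ 2) \<le> d * c" using bc od hc by (simp add: field_simps)
      show ?thesis
      proof (cases "\<beta> = 0")
        case True
        with D have "a * \<gamma>^ 2 \<le> 0" by simp
        with ap have "\<gamma> = 0" by (simp add: mult_le_0_iff)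
        with True show ?thesis by simp
      next
        case False
        with q have bp: "\<beta> > 0" by simp
        have gp: "\<gamma> > 0"
        proof (rule ccontr)
          assume "\<not> \<gamma> > 0"
          hence "- \<gamma> / \<beta> \<ge> 0" using bp by (simp add: divide_nonpos_pos)
          hence "c + b * (- \<gamma> / \<beta>) + a * (- \<gamma> / \<beta>)^ 2 > 0" by (rule hP)
          hence "\<beta>^ 2 * (c + b * (- \<gamma> / \<beta>) + a * (- \<gamma> / \<beta>)^ 2) > 0" using bp by simp
          moreover have "\<beta>^ 2 * (c + b * (- \<gamma> / \<beta>) + a * (- \<gamma> / \<beta>)^ 2)
              = c * \<beta>^ 2 - b * \<gamma> * \<beta> + a * \<gamma>^ 2" using bp
            by (simp add: field_simps power2_eq_square)
          ultimately have "c * \<beta>^ 2 - b * \<gamma> * \<beta> + a * \<gamma>^ 2 > 0" by simp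
          with D show False by simp
        qed
        have "b * \<gamma> * \<beta> \<ge> c * \<beta>^ 2 + a * \<gamma>^ 2" using D by simp
        moreover have "c * \<beta>^ 2 + a * \<gamma>^ 2 > 0" using ap gp hc bp by (simp add: add_pos_pos)
        ultimately have "b * \<gamma> * \<beta> > 0" by simp
        hence b0: "b > 0" using gp bp by (simp add: zero_less_mult_iff)
        have "b * \<gamma> \<ge> c * \<beta>" using E1 by simp
        hence "d * (b * \<gamma>) \<ge> d * (c * \<beta>)" using d01 by simp
        moreover have "d * c * \<beta> \<ge> b * (1 - d^ 2) * \<beta>" using bc' bp by simp
        ultimately have "b * (\<gamma> * d - (1 - d^ 2) * \<beta>) \<ge> 0" by (simp add: algebra_simps)
        hence gd: "\<gamma> * d - (1 - d^ 2) * \<beta> \<ge> 0" using b0 by (simp add: zero_le_mult_iff)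
        have "\<beta> * (\<gamma> * (b * d + a * (d^ 2 - 1)) - c * \<beta> * d)
           = d * (b * \<gamma> * \<beta> - c * \<beta>^ 2 - a * \<gamma>^ 2) + a * \<gamma> * (\<gamma> * d - (1 - d^ 2) * \<beta>)"
          by (simp add: algebra_simps power2_eq_square)
        also have "\<dots> \<ge> 0" using D gd d01 ap gp by simp
        finally show ?thesis using bp by (simp add: zero_le_mult_iff)
      qed
    qed
    then show ?thesis using adiff ap by (metis zero_le_mult_iff not_less)
  qed
  have den: "c + b * d + a * d^ 2 - a > 0" by (rule hQ)
  have "(c1 + b1 * d + a1 * d^ 2 - a1) * c \<le> c1 * (c + b * d + a * d^ 2 - a)"
    using diff by (simp add: algebra_simps)
  then show ?thesis using den hc by (simp add: divide_simps)
qed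

lemma Im_inv_pos: "Im (1 / (v::complex)) < 0 \<Longrightarrow> Im v > 0"
  by (simp add: Im_divide neg_less_0_iff_less zero_less_divide_iff) (metis add_nonneg_nonneg not_le zero_le_power2)

lemma stab_quad:
  fixes f0 f1 e :: complex
  assumes h: "\<And>v. Im v > 0 \<Longrightarrow> f0 + f1 * v + e * v^ 2 \<noteq> 0"
  shows "Im (f1 * cnj f0) \<le> 0"
proof (rule ccontr)
  assume "\<not> Im (f1 * cnj f0) \<le> 0"
  hence pos: "Im f1 * Re f0 - Re f1 * Im f0 > 0" by simp
  hence f0: "f0 \<noteq> 0" and f1: "f1 \<noteq> 0" by auto
  have d0: "(Re f0)^ 2 + (Im f0)^ 2 > 0" using f0 complex_neq_0 by blast
  have d1: "(Re f1)^ 2 + (Im f1)^ 2 > 0" using f1 complex_neq_0 by blast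
  have imk: "Im (f1 / f0) > 0" using pos d0
    by (simp add: Im_divide algebra_simps)
  show False
  proof (cases "e = 0")
    case True
    have "Im (- f0 / f1) > 0" using pos d1
      by (simp add: Im_divide algebra_simps divide_neg_pos)
    moreover have "f0 + f1 * (- f0 / f1) + e * (- f0 / f1)^ 2 = 0" using True f1 by simp
    ultimately show False using h by blast
  next
    case False
    define s where "s = csqrt (f1^ 2 - 4 * e * f0)"
    have s2: "s^ 2 = f1^ 2 - 4 * e * f0" unfolding s_def by simp
    define v1 where "v1 = (- f1 + s) / (2 * e)"
    define v2 where "v2 = (- f1 - s) / (2 * e)"
    have w1: "2 * e * v1 = - f1 + s" unfolding v1_def using False by simp
    have w2: "2 * e * v2 = - f1 - s" unfolding v2_def using False by simp
    have e4: "4 * e \<noteq> 0" using False by simp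
    have "4 * e * (f0 + f1 * v1 + e * v1^ 2) = 4 * e * f0 + 2 * f1 * (2 * e * v1) + (2 * e * v1)^ 2"
      by (simp add: algebra_simps power2_eq_square)
    also have "\<dots> = 4 * e * f0 + 2 * f1 * (- f1 + s) + (- f1 + s)^ 2" by (simp only: w1)
    also have "\<dots> = 0" using s2 by (simp add: algebra_simps power2_eq_square)
    finally have r1: "f0 + f1 * v1 + e * v1^ 2 = 0" using e4 by simp
    have "4 * e * (f0 + f1 * v2 + e * v2^ 2) = 4 * e * f0 + 2 * f1 * (2 * e * v2) + (2 * e * v2)^ 2"
      by (simp add: algebra_simps power2_eq_square)
    also have "\<dots> = 4 * e * f0 + 2 * f1 * (- f1 - s) + (- f1 - s)^ 2" by (simp only: w2)
    also have "\<dots> = 0" using s2 by (simp add: algebra_simps power2_eq_square)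
    finally have r2: "f0 + f1 * v2 + e * v2^ 2 = 0" using e4 by simp
    have "(2 * e) * (v1 + v2) = 2 * e * v1 + 2 * e * v2" by (simp add: algebra_simps)
    hence "(2 * e) * (v1 + v2) = - f1 + s + (- f1 - s)" using w1 w2 by simp
    hence "2 * (e * (v1 + v2)) = 2 * (- f1)" by (simp add: algebra_simps)
    hence "e * (v1 + v2) = - f1" by (metis mult_cancel_left zero_neq_numeral)
    hence sum: "v1 + v2 = - f1 / e" using False by (simp add: field_simps)
    have "(2 * e * v1) * (2 * e * v2) = (- f1 + s) * (- f1 - s)" using w1 w2 by simp
    also have "\<dots> = 4 * e * f0" using s2 by (simp add: algebra_simps power2_eq_square)
    finally have "(4 * e) * (e * (v1 * v2)) = (4 * e) * f0" by (simp add: algebra_simps)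
    hence "e * (v1 * v2) = f0" using e4 by simp
    hence prod: "v1 * v2 = f0 / e" using False by (simp add: field_simps)
    have nz: "v1 \<noteq> 0" "v2 \<noteq> 0" using prod f0 False by auto
    have "1 / v1 + 1 / v2 = (v1 + v2) / (v1 * v2)" using nz by (simp add: field_simps)
    also have "\<dots> = - (f1 / f0)" using sum prod False f0 by simp
    finally have "1 / v1 + 1 / v2 = - (f1 / f0)" .
    hence "Im (1 / v1) + Im (1 / v2) = - Im (f1 / f0)" by (metis uminus_complex.sel(2) plus_complex.sel(2))
    hence "Im (1 / v1) + Im (1 / v2) < 0" using imk by simp
    hence "Im (1 / v1) < 0 \<or> Im (1 / v2) < 0" by linarith
    hence "Im v1 > 0 \<or> Im v2 > 0" using Im_inv_pos by blast
    with r1 r2 h show False by blast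
  qed
qed

definition cp :: "real poly \<Rightarrow> complex \<Rightarrow> complex" where
  "cp X w = poly (map_poly of_real X) w"

lemma cp_real: "cp X (of_real y) = of_real (poly X y)"
  unfolding cp_def by (induction X) (auto simp: map_poly_pCons)

lemma cp_cnj: "cnj (cp X w) = cp X (cnj w)"
  unfolding cp_def by (rule poly_cnj_real) (simp add: coeff_map_poly)

lemma pderiv_map_of_real: "pderiv (map_poly (of_real :: real \<Rightarrow> complex) X) = map_poly of_real (pderiv X)"
  by (rule poly_eqI) (simp add: coeff_pderiv coeff_map_poly)

lemma cp_deriv_chain [derivative_intros]:
  assumes "(f has_field_derivative f') (at x within s)"
  shows "((\<lambda>x. cp X (f x)) has_field_derivative cp (pderiv X) (f x) * f') (at x within s)"
proof -
  have "(cp X has_field_derivative cp (pderiv X) (f x)) (at (f x))"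
    unfolding cp_def using poly_DERIV[of "map_poly of_real X" "f x"] by (simp add: pderiv_map_of_real)
  from DERIV_chain2[OF this assms] show ?thesis .
qed

lemma eval2_pCons: "eval2 (pCons c p) x y = poly (map_poly of_real c) y + x * eval2 p x y"
  unfolding eval2_def by (subst map_poly_pCons) auto

lemma eval2_0: "eval2 0 x y = 0"
  unfolding eval2_def by simp

lemma eval2_3: "eval2 [:C, B, A:] (x::complex) w = cp C w + x * (cp B w + x * cp A w)"
  by (simp add: eval2_pCons eval2_0 cp_def)

lemma eval2_3r: "eval2 [:C, B, A:] (x::real) y = poly C y + x * (poly B y + x * poly A y)"
  by (simp add: eval2_pCons eval2_0)

lemma decomp:
  assumes "degree (p :: bipoly) \<le> 2"
  shows "p = [:coeff p 0, coeff p 1, coeff p 2:]"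
proof (rule poly_eqI)
  fix n
  show "coeff p n = coeff [:coeff p 0, coeff p 1, coeff p 2:] n"
  proof (cases "n \<le> 2")
    case True
    then have "n = 0 \<or> n = 1 \<or> n = 2" by auto
    then show ?thesis by (auto simp: numeral_2_eq_2)
  next
    case False
    then show ?thesis using assms by (auto simp: coeff_eq_0 coeff_pCons split: nat.splits)
  qed
qed

lemma dx3: "dx [:C, B, A:] = [:B, 2 * A:]"
  by (simp add: dx_def pderiv_pCons)

lemma dxx3: "dx (dx [:C, B, A:]) = [:2 * A:]"
  by (simp add: dx3) (simp add: dx_def pderiv_pCons)

lemma half2: "smult (1/2) (2 * (A :: real poly)) = A"
proof -
  have "2 * A = smult 2 A" by (rule numeral_mult_conv_smult)
  thus ?thesis by simp
qed

lemma q3: "[:C, B, A:] - smult [:1/2:] (dx (dx [:C, B, A:])) = [:C - A, B, A:]"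
  by (simp add: dxx3 half2)

lemma dy3: "dy [:C, B, A:] = [:pderiv C, pderiv B, pderiv A:]"
  by (simp add: dy_def map_poly_pCons)

lemma Wnonneg:
  fixes A B C :: "real poly" and x y0 :: real
  assumes st: "\<And>z w. Im z > 0 \<Longrightarrow> Im w > 0 \<Longrightarrow> cp C w + z * (cp B w + z * cp A w) \<noteq> 0"
  shows "(poly B y0 + 2 * x * poly A y0) * (poly (pderiv C) y0 + x * poly (pderiv B) y0 + x^ 2 * poly (pderiv A) y0)
       - (poly C y0 + x * poly B y0 + x^ 2 * poly A y0) * (poly (pderiv B) y0 + 2 * x * poly (pderiv A) y0) \<ge> 0"
    (is "?W \<ge> 0")
proof (rule ccontr)
  assume neg: "\<not> ?W \<ge> 0"
  define X where "X = (of_real x :: complex)"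
  define g0 where "g0 w = cp C w + X * cp B w + X^ 2 * cp A w" for w
  define g1 where "g1 w = cp B w + 2 * X * cp A w" for w
  define Y where "Y = (of_real y0 :: complex)"
  define H where "H e = g1 (Y + \<i> * e) * g0 (Y - \<i> * e)" for e
  define D where "D = (cp (pderiv B) Y + 2 * X * cp (pderiv A) Y) * \<i> * g0 Y
     + g1 Y * ((cp (pderiv C) Y + X * cp (pderiv B) Y + X^ 2 * cp (pderiv A) Y) * (- \<i>))"
  have "(H has_field_derivative D) (at 0)"
    unfolding H_def g0_def g1_def D_def
    by (auto intro!: derivative_eq_intros simp: algebra_simps)
  hence "((\<lambda>t. H (of_real t)) has_vector_derivative D) (at 0)"
    using has_vector_derivative_real_field[of H D 0] by simp
  hence dN: "((\<lambda>t. Im (H (of_real t))) has_field_derivative Im D) (at 0)"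
    by (rule has_field_derivative_Im)
  have ImD: "Im D = - ?W"
    unfolding D_def g0_def g1_def X_def Y_def
    by (simp add: cp_real algebra_simps power2_eq_square flip: of_real_mult of_real_add of_real_diff)
  have "Im D > 0" using neg ImD by simp
  from DERIV_pos_inc_right[OF dN this] obtain d where d: "d > 0"
    and inc: "\<And>h. h > 0 \<Longrightarrow> h < d \<Longrightarrow> Im (H (of_real 0)) < Im (H (of_real (0 + h)))" by blast
  have "Im (H (of_real 0)) < Im (H (of_real (d / 2)))" using inc[of "d/2"] d by simp
  moreover have "Im (H 0) = 0"
    unfolding H_def g0_def g1_def X_def Y_def
    by (simp add: cp_real flip: of_real_mult of_real_add of_real_power)
  moreover have "Im (H (of_real (d / 2))) \<le> 0"
  proof -
    define w where "w = Y + \<i> * of_real (d / 2)"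
    have Imw: "Im w > 0" unfolding w_def Y_def using d by simp
    have cw: "Y - \<i> * of_real (d / 2) = cnj w" unfolding w_def Y_def by simp
    have g0c: "g0 (cnj w) = cnj (g0 w)" unfolding g0_def X_def by (simp add: cp_cnj)
    have "Im (g1 w * cnj (g0 w)) \<le> 0"
    proof (rule stab_quad[of "g0 w" "g1 w" "cp A w"])
      fix v :: complex assume "Im v > 0"
      hence "Im (X + v) > 0" unfolding X_def by simp
      hence "cp C w + (X + v) * (cp B w + (X + v) * cp A w) \<noteq> 0" using st Imw by blast
      moreover have "cp C w + (X + v) * (cp B w + (X + v) * cp A w) = g0 w + g1 w * v + cp A w * v^ 2"
        unfolding g0_def g1_def by (simp add: algebra_simps power2_eq_square)
      ultimately show "g0 w + g1 w * v + cp A w * v^ 2 \<noteq> 0" by simp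
    qed
    thus ?thesis unfolding H_def using cw g0c w_def by simp
  qed
  ultimately show False by simp
qed

lemma lead_nonneg:
  fixes al be ga x0 :: real
  assumes h: "\<And>s. s \<ge> 0 \<Longrightarrow> ga + (x0 + s) * (be + (x0 + s) * al) > 0"
  shows "al \<ge> 0"
proof (rule ccontr)
  assume "\<not> al \<ge> 0"
  hence an: "al < 0" by simp
  define K where "K = (\<bar>be\<bar> + \<bar>ga\<bar>) / (- al)"
  have K0: "K \<ge> 0" unfolding K_def using an by (intro divide_nonneg_pos) auto
  have Ka: "K * al = - (\<bar>be\<bar> + \<bar>ga\<bar>)" unfolding K_def using an by (simp add: field_simps)
  define s where "s = \<bar>x0\<bar> + 1 + K"
  have s0: "s \<ge> 0" unfolding s_def using K0 by simp
  define x where "x = x0 + s"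
  have x1: "x \<ge> 1 + K" unfolding x_def s_def by simp
  have "x * al \<le> (1 + K) * al" using x1 an by (simp add: mult_right_mono_neg)
  hence xa: "x * al \<le> al - (\<bar>be\<bar> + \<bar>ga\<bar>)" using Ka by (simp add: algebra_simps)
  have xpos: "x \<ge> 1" using x1 K0 by simp
  have "ga + x * (be + x * al) \<le> \<bar>ga\<bar> + x * \<bar>be\<bar> + x * (x * al)"
  proof -
    have "x * be \<le> x * \<bar>be\<bar>" using xpos by (intro mult_left_mono) auto
    moreover have "ga + x * (be + x * al) = ga + x * be + x * (x * al)" by (simp add: algebra_simps)
    ultimately show ?thesis by linarith
  qed
  also have "\<dots> \<le> x * \<bar>ga\<bar> + x * \<bar>be\<bar> + x * (x * al)"
    using xpos by (simp add: mult_right_mono[of 1 x "\<bar>ga\<bar>", simplified])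
  also have "\<dots> = x * (\<bar>ga\<bar> + \<bar>be\<bar> + x * al)" by (simp add: algebra_simps)
  also have "\<dots> \<le> x * al" using xa xpos by (intro mult_left_mono) auto
  also have "\<dots> < 0" using xpos an by (simp add: mult_pos_neg)
  finally have "ga + x * (be + x * al) < 0" .
  with h[OF s0] show False unfolding x_def by simp
qed

lemma deriv_nonneg_at_zero:
  fixes A :: "real poly"
  assumes "poly A y0 = 0" and "\<And>t. t \<ge> 0 \<Longrightarrow> poly A (y0 + t) \<ge> 0"
  shows "poly (pderiv A) y0 \<ge> 0"
proof (rule ccontr)
  assume "\<not> poly (pderiv A) y0 \<ge> 0"
  hence "poly (pderiv A) y0 < 0" by simp
  from DERIV_neg_dec_right[OF poly_DERIV[of A y0] this] obtain d where
    "d > 0" "\<forall>h>0. h < d \<longrightarrow> poly A y0 > poly A (y0 + h)" by blast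
  hence "poly A y0 > poly A (y0 + d / 2)" by simp
  with assms(1) assms(2)[of "d/2"] \<open>d > 0\<close> show False by simp
qed

theorem lemma3p11:
  fixes p :: bipoly and x0 y0 \<delta> :: real
  assumes "real_stable2 p"
    and "degree p \<le> 2"
    and "(x0, y0) \<in> above_roots2 p"
    and "(x0 + \<delta>, y0) \<in> above_roots2 (p - smult [:1/2:] (dx (dx p)))"
  shows "(\<delta> = 1 \<longrightarrow>
           barrier_y (p - smult [:1/2:] (dx (dx p))) (x0 + \<delta>) y0 \<le> barrier_y p x0 y0)
       \<and> (0 < \<delta> \<and> \<delta> < 1 \<and> barrier_x p x0 y0 \<le> \<delta> / (1 - \<delta>\<^sup>2) \<longrightarrow>
           barrier_y (p - smult [:1/2:] (dx (dx p))) (x0 + \<delta>) y0 \<le> barrier_y p x0 y0)"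
proof -
  define A where "A = coeff p 2"
  define B where "B = coeff p 1"
  define C where "C = coeff p 0"
  have pe: "p = [:C, B, A:]" unfolding A_def B_def C_def using decomp[OF assms(2)] .
  have qe: "p - smult [:1/2:] (dx (dx p)) = [:C - A, B, A:]" unfolding pe by (rule q3)
  have st: "\<And>z w. Im z > 0 \<Longrightarrow> Im w > 0 \<Longrightarrow> cp C w + z * (cp B w + z * cp A w) \<noteq> 0"
    using assms(1) unfolding real_stable2_def pe eval2_3 by blast
  have Pt: "\<And>s t. s \<ge> 0 \<Longrightarrow> t \<ge> 0 \<Longrightarrow>
      poly C (y0 + t) + (x0 + s) * (poly B (y0 + t) + (x0 + s) * poly A (y0 + t)) > 0"
    using assms(3) unfolding above_roots2_def pe eval2_3r by auto
  have Qt: "poly C y0 - poly A y0 + (x0 + \<delta>) * (poly B y0 + (x0 + \<delta>) * poly A y0) > 0"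
    using assms(4) unfolding above_roots2_def qe eval2_3r by (auto elim!: allE[of _ 0])
  define a where "a = poly A y0"
  define a1 where "a1 = poly (pderiv A) y0"
  define c where "c = poly C y0 + x0 * poly B y0 + x0^ 2 * a"
  define b where "b = poly B y0 + 2 * x0 * a"
  define c1 where "c1 = poly (pderiv C) y0 + x0 * poly (pderiv B) y0 + x0^ 2 * a1"
  define b1 where "b1 = poly (pderiv B) y0 + 2 * x0 * a1"
  have ha: "a \<ge> 0" unfolding a_def
    by (rule lead_nonneg[of "poly C y0" x0 "poly B y0"]) (use Pt[of _ 0] in simp)
  have ha1: "a1 \<ge> 0" if "a = 0"
    unfolding a1_def
  proof (rule deriv_nonneg_at_zero)
    show "poly A y0 = 0" using that a_def by simp
    fix t :: real assume "t \<ge> 0"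
    show "poly A (y0 + t) \<ge> 0"
      by (rule lead_nonneg[of "poly C (y0 + t)" x0 "poly B (y0 + t)"]) (use Pt \<open>t \<ge> 0\<close> in simp)
  qed
  have hc: "c > 0" using Pt[of 0 0] unfolding c_def a_def by (simp add: algebra_simps power2_eq_square)
  have hP: "c + b * s + a * s^ 2 > 0" if "s \<ge> 0" for s
  proof -
    have "c + b * s + a * s^ 2 = poly C (y0 + 0) + (x0 + s) * (poly B (y0 + 0) + (x0 + s) * poly A (y0 + 0))"
      unfolding c_def b_def a_def by (simp add: algebra_simps power2_eq_square)
    thus ?thesis using Pt[of s 0] that by simp
  qed
  have hQ: "c + b * \<delta> + a * \<delta>^ 2 - a > 0"
  proof -
    have "c + b * \<delta> + a * \<delta>^ 2 - a = poly C y0 - poly A y0 + (x0 + \<delta>) * (poly B y0 + (x0 + \<delta>) * poly A y0)"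
      unfolding c_def b_def a_def by (simp add: algebra_simps power2_eq_square)
    thus ?thesis using Qt by simp
  qed
  have hW: "(a * b1 - a1 * b) * s^ 2 + (2 * (a * c1 - a1 * c)) * s + (b * c1 - b1 * c) \<ge> 0" for s
  proof -
    have "(a * b1 - a1 * b) * s^ 2 + (2 * (a * c1 - a1 * c)) * s + (b * c1 - b1 * c) =
      (poly B y0 + 2 * (x0 + s) * poly A y0) * (poly (pderiv C) y0 + (x0 + s) * poly (pderiv B) y0 + (x0 + s)^ 2 * poly (pderiv A) y0)
       - (poly C y0 + (x0 + s) * poly B y0 + (x0 + s)^ 2 * poly A y0) * (poly (pderiv B) y0 + 2 * (x0 + s) * poly (pderiv A) y0)"
      unfolding a_def b_def c_def a1_def b1_def c1_def by (simp add: algebra_simps power2_eq_square)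
    thus ?thesis using Wnonneg[OF st, of y0 "x0 + s"] by simp
  qed
  have bx: "barrier_x p x0 y0 = b / c"
    unfolding barrier_x_def pe dx3 eval2_3r b_def c_def a_def
    by (simp add: eval2_pCons eval2_0 algebra_simps power2_eq_square)
  have byp: "barrier_y p x0 y0 = c1 / c"
    unfolding barrier_y_def pe dy3 eval2_3r c1_def c_def a_def a1_def
    by (simp add: algebra_simps power2_eq_square)
  have byq: "barrier_y (p - smult [:1/2:] (dx (dx p))) (x0 + \<delta>) y0
      = (c1 + b1 * \<delta> + a1 * \<delta>^ 2 - a1) / (c + b * \<delta> + a * \<delta>^ 2 - a)"
    unfolding barrier_y_def qe dy3 eval2_3r c1_def c_def a_def a1_def b_def b1_def
    by (simp add: algebra_simps power2_eq_square pderiv_diff)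
  show ?thesis
  proof (intro conjI impI)
    assume "\<delta> = 1"
    show "barrier_y (p - smult [:1/2:] (dx (dx p))) (x0 + \<delta>) y0 \<le> barrier_y p x0 y0"
      unfolding byq byp by (rule core[OF hc hP hQ hW ha ha1]) (use \<open>\<delta> = 1\<close> in auto)
  next
    assume h: "0 < \<delta> \<and> \<delta> < 1 \<and> barrier_x p x0 y0 \<le> \<delta> / (1 - \<delta>\<^sup>2)"
    show "barrier_y (p - smult [:1/2:] (dx (dx p))) (x0 + \<delta>) y0 \<le> barrier_y p x0 y0"
      unfolding byq byp by (rule core[OF hc hP hQ hW ha ha1]) (use h bx in auto)
  qed
qed

end
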